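(* Let $\bm{X},\bm{Y}\in\mathbb{R}^{n\times r}$ with $\bm{X}\bm{Y}^\top$ of rank $r$, and let $\bm{U}\bm{\Sigma}\bm{V}^\top$ be the compact SVD of $\bm{X}\bm{Y}^\top$. Then there exists an invertible $\bm{Q}\in\mathbb{R}^{r\times r}$ with $\bm{X}=\bm{U}\bm{\Sigma}^{1/2}\bm{Q}$ and $\bm{Y}=\bm{V}\bm{\Sigma}^{1/2}\bm{Q}^{-\top}$; moreover, if $\bm{U}_{\bm{Q}}\bm{\Sigma}_{\bm{Q}}\bm{V}_{\bm{Q}}^\top$ is the SVD of $\bm{Q}$, then $\|\bm{\Sigma}_{\bm{Q}}-\bm{\Sigma}_{\bm{Q}}^{-1}\|_{\mathrm{F}}\le\frac{1}{\sigma_{\min}(\bm{\Sigma})}\|\bm{X}^\top\bm{X}-\bm{Y}^\top\bm{Y}\|_{\mathrm{F}}$. In particular, if $\bm{X}^\top\bm{X}=\bm{Y}^\top\bm{Y}$ then $\bm{Q}$ is an orthogonal matrix.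
   Context: $\sigma_{\min}(\bm{\Sigma})$ denotes the smallest diagonal entry of $\bm{\Sigma}$. *)

theory Defs
  imports "HOL-Analysis.Analysis"
begin

definition diag_mat :: "real^'r \<Rightarrow> real^'r^'r" where
  "diag_mat d = (\<chi> i j. if i = j then d $ i else 0)"

definition frob_norm :: "real^'c^'m \<Rightarrow> real" where
  "frob_norm A = sqrt (\<Sum>i\<in>UNIV. \<Sum>j\<in>UNIV. (A $ i $ j)\<^sup>2)"

definition is_compact_svd :: "real^'m^'m \<Rightarrow> real^'r^'m \<Rightarrow> real^'r \<Rightarrow> real^'r^'m \<Rightarrow> bool" where
  "is_compact_svd M U s V \<longleftrightarrow>
     transpose U ** U = mat 1 \<and> transpose V ** V = mat 1 \<and>
     (\<forall>i. s $ i > 0) \<and> M = U ** diag_mat s ** transpose V"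

definition is_svd :: "real^'r^'r \<Rightarrow> real^'r^'r \<Rightarrow> real^'r \<Rightarrow> real^'r^'r \<Rightarrow> bool" where
  "is_svd Q U s V \<longleftrightarrow>
     orthogonal_matrix U \<and> orthogonal_matrix V \<and>
     (\<forall>i. s $ i \<ge> 0) \<and> Q = U ** diag_mat s ** transpose V"

end

theory Submission
  imports Defs
begin

lemma diag_one: "diag_mat (\<chi> i. 1) = mat 1"
  by (simp add: diag_mat_def mat_def vec_eq_iff)

lemma diag_mult_diag: "diag_mat a ** diag_mat b = diag_mat (\<chi> i. a$i * b$i)"
  unfolding diag_mat_def matrix_matrix_mult_def vec_eq_iff
  by (simp add: mult_delta_left mult_delta_right sum.delta sum.delta' cong: if_cong)
lemma diag_sandwich: "(diag_mat a ** M ** diag_mat b) $ i $ j = a$i * M$i$j * b$j"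
proof -
  have "(diag_mat a ** M) $ i $ k = a$i * M$i$k" for k
    unfolding diag_mat_def matrix_matrix_mult_def by (simp add: mult_delta_left mult_delta_right sum.delta sum.delta' cong: if_cong)
  then show ?thesis
    unfolding matrix_matrix_mult_def[of "diag_mat a ** M"] by (simp add: diag_mat_def mult_delta_left mult_delta_right sum.delta sum.delta' cong: if_cong)
qed
lemma diag_mv: "diag_mat d *v x = (\<chi> i. d$i * x$i)"
  unfolding diag_mat_def matrix_vector_mult_def vec_eq_iff
  by (simp add: mult_delta_left mult_delta_right sum.delta sum.delta' cong: if_cong)
lemma fsq_diag0: "(\<Sum>i\<in>UNIV. \<Sum>j\<in>UNIV. ((diag_mat d) $ i $ j)\<^sup>2) = (\<Sum>i\<in>UNIV. (d$i)\<^sup>2)"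
proof -
  have "((diag_mat d)$i$j)\<^sup>2 = (if i = j then (d$i)\<^sup>2 else 0)" for i j by (simp add: diag_mat_def)
  then show ?thesis by (simp add: sum.delta)
qed
lemma transpose_diag[simp]: "transpose (diag_mat d) = diag_mat d"
  by (simp add: diag_mat_def transpose_def vec_eq_iff)
lemma matrix_inv_eq:
  fixes A B :: "real^'n^'n"
  assumes "A ** B = mat 1" shows "matrix_inv A = B"
proof -
  have BA: "B ** A = mat 1" using assms matrix_left_right_inverse by blast
  have ex: "\<exists>A'. A ** A' = mat 1 \<and> A' ** A = mat 1" using assms BA by blast
  have "A ** matrix_inv A = mat 1 \<and> matrix_inv A ** A = mat 1"
    unfolding matrix_inv_def by (rule someI_ex[OF ex])
  then have "matrix_inv A ** A = mat 1" by blast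
  then have "matrix_inv A ** (A ** B) = B" by (simp add: matrix_mul_assoc)
  then show ?thesis using assms by simp
qed

definition fsq :: "real^'c^'m \<Rightarrow> real" where
  "fsq A = (\<Sum>i\<in>UNIV. \<Sum>j\<in>UNIV. (A $ i $ j)\<^sup>2)"

lemma frob_fsq: "frob_norm A = sqrt (fsq A)"
  by (simp add: frob_norm_def fsq_def)

lemma fsq_column: "fsq A = (\<Sum>j\<in>UNIV. (norm (column j A))\<^sup>2)"
  unfolding fsq_def by (subst sum.swap) (simp add: column_def norm_vec_def L2_set_def real_norm_def sum_nonneg)

lemma fsq_transpose: "fsq (transpose A) = fsq A"
  unfolding fsq_def transpose_def by (subst sum.swap) simp

lemma fsq_orth_left:
  fixes R :: "real^'m^'m" and A :: "real^'c^'m"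
  assumes "orthogonal_matrix R" shows "fsq (R ** A) = fsq A"
proof -
  have ot: "orthogonal_transformation ((*v) R)"
    using assms by (simp add: orthogonal_transformation_matrix)
  have "column j (R ** A) = R *v column j A" for j
    by (simp add: column_def matrix_matrix_mult_def matrix_vector_mult_def vec_eq_iff)
  then show ?thesis unfolding fsq_column using ot
    by (simp add: orthogonal_transformation)
qed

lemma fsq_orth_right:
  fixes R :: "real^'c^'c" and A :: "real^'c^'m"
  assumes "orthogonal_matrix R" shows "fsq (A ** R) = fsq A"
proof -
  have "fsq (A ** R) = fsq (transpose R ** transpose A)"
    by (metis fsq_transpose matrix_transpose_mul)
  also have "\<dots> = fsq (transpose A)" using assms by (intro fsq_orth_left) simp
  also have "\<dots> = fsq A" by (rule fsq_transpose)
  finally show ?thesis .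
qed

lemma fsq_ge_diag:
  fixes A :: "real^'n^'n"
  shows "(\<Sum>i\<in>UNIV. (A$i$i)\<^sup>2) \<le> fsq A"
  unfolding fsq_def
  by (rule sum_mono) (rule member_le_sum, auto)

lemma mat_diff_ldistrib: "(A::real^'n^'m) ** (B - C) = A ** B - A ** C"
  by (simp add: matrix_matrix_mult_def vec_eq_iff sum_subtractf right_diff_distrib)

lemma mat_diff_rdistrib: "((B::real^'n^'m) - C) ** A = B ** A - C ** A"
  by (simp add: matrix_matrix_mult_def vec_eq_iff sum_subtractf left_diff_distrib)

lemma fsq_diag: "fsq (diag_mat d) = (\<Sum>i\<in>UNIV. (d$i)\<^sup>2)"
  unfolding fsq_def by (rule fsq_diag0)

lemma diag_diff: "diag_mat a - diag_mat b = diag_mat (a - b)"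
  by (simp add: diag_mat_def vec_eq_iff)

lemma Min_s:
  fixes s :: "real^'r"
  shows "Min (range (\<lambda>i. s $ i)) \<le> s $ k" "(\<forall>i. s$i > 0) \<Longrightarrow> Min (range (\<lambda>i. s $ i)) > 0"
proof -
  have f: "finite (range (\<lambda>i. s $ i))" by simp
  show "Min (range (\<lambda>i. s $ i)) \<le> s $ k" using f by (intro Min_le) auto
  assume "\<forall>i. s$i > 0"
  moreover have "Min (range (\<lambda>i. s $ i)) \<in> range (\<lambda>i. s $ i)" using f by (intro Min_in) auto
  ultimately show "Min (range (\<lambda>i. s $ i)) > 0" by auto
qed

lemma ineq_core:
  fixes Q Q' UQ VQ :: "real^'r^'r" and s sQ :: "real^'r"
  assumes QQ': "Q ** Q' = mat 1" and spos: "\<forall>i. s$i > 0" and svd: "is_svd Q UQ sQ VQ"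
  shows "frob_norm (diag_mat sQ - diag_mat (\<chi> i. inverse (sQ $ i)))
     \<le> (1 / Min (range (\<lambda>i. s $ i))) *
        frob_norm (transpose Q ** diag_mat s ** Q - Q' ** diag_mat s ** transpose Q')"
proof -
  from svd have oU: "orthogonal_matrix UQ" and oV: "orthogonal_matrix VQ"
    and nn: "\<forall>i. sQ$i \<ge> 0" and Qeq: "Q = UQ ** diag_mat sQ ** transpose VQ"
    unfolding is_svd_def by auto
  have UtU: "transpose UQ ** UQ = mat 1" and UUt: "UQ ** transpose UQ = mat 1"
    using oU by (auto simp: orthogonal_matrix_def)
  have VtV: "transpose VQ ** VQ = mat 1" and VVt: "VQ ** transpose VQ = mat 1"
    using oV by (auto simp: orthogonal_matrix_def)
  have Q'Q: "Q' ** Q = mat 1" using QQ' matrix_left_right_inverse by blast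
  have sQpos: "sQ$i > 0" for i
  proof (rule ccontr)
    assume "\<not> sQ$i > 0"
    with nn have z: "sQ$i = 0" by (meson not_le order_antisym)
    define y where "y = VQ *v axis i 1"
    have d0: "diag_mat sQ *v axis i (1::real) = 0"
      using z by (simp add: diag_mv axis_def vec_eq_iff)
    have "Q *v y = UQ *v (diag_mat sQ *v ((transpose VQ ** VQ) *v axis i 1))"
      by (simp add: y_def Qeq matrix_vector_mul_assoc matrix_mul_assoc)
    also have "\<dots> = 0" using VtV d0 by simp
    finally have "Q *v y = 0" .
    then have "y = 0" using Q'Q by (metis matrix_vector_mul_assoc matrix_vector_mul_lid matrix_vector_mult_0_right)
    then have "axis i (1::real) = 0" using VtV unfolding y_def
      by (metis matrix_vector_mul_assoc matrix_vector_mul_lid matrix_vector_mult_0_right)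
    then show False by (simp add: axis_eq_0_iff)
  qed
  define Dq where "Dq = diag_mat sQ"
  define Di where "Di = diag_mat (\<chi> i. inverse (sQ $ i))"
  define S where "S = diag_mat s"
  have DqDi: "Dq ** Di = mat 1"
    unfolding Dq_def Di_def diag_mult_diag using sQpos
    by (simp add: diag_one[symmetric] vec_eq_iff less_imp_neq[symmetric])
  have "Q ** (VQ ** Di ** transpose UQ) = UQ ** Dq ** (transpose VQ ** VQ) ** Di ** transpose UQ"
    by (simp add: Qeq Dq_def matrix_mul_assoc)
  also have "\<dots> = UQ ** (Dq ** Di) ** transpose UQ" by (simp add: VtV matrix_mul_assoc)
  also have "\<dots> = mat 1" by (simp add: DqDi UUt)
  finally have "Q ** (VQ ** Di ** transpose UQ) = mat 1" .
  then have Q'eq: "Q' = VQ ** Di ** transpose UQ"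
    using matrix_inv_eq QQ' by metis
  define T where "T = transpose UQ ** S ** UQ"
  define G where "G = transpose Q ** S ** Q - Q' ** S ** transpose Q'"
  define E where "E = transpose VQ ** G ** VQ"
  have fE: "fsq E = fsq G"
  proof -
    have "fsq E = fsq (transpose VQ ** G)" unfolding E_def by (rule fsq_orth_right[OF oV])
    also have "\<dots> = fsq G" by (rule fsq_orth_left) (simp add: oV)
    finally show ?thesis .
  qed
  have QV: "Q ** VQ = UQ ** Dq" by (simp add: Qeq Dq_def matrix_mul_assoc[symmetric] VtV)
  have VtQt: "transpose VQ ** transpose Q = Dq ** transpose UQ"
    by (metis QV matrix_transpose_mul transpose_diag Dq_def)
  have VtQ': "transpose VQ ** Q' = Di ** transpose UQ"
    by (simp add: Q'eq matrix_mul_assoc VtV)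
  have Q'tV: "transpose Q' ** VQ = UQ ** Di"
    by (metis VtQ' matrix_transpose_mul transpose_diag Di_def transpose_transpose)
  have Eeq: "E = Dq ** T ** Dq - Di ** T ** Di"
  proof -
    have "E = (transpose VQ ** transpose Q) ** S ** (Q ** VQ) - (transpose VQ ** Q') ** S ** (transpose Q' ** VQ)"
      by (simp add: E_def G_def mat_diff_ldistrib mat_diff_rdistrib matrix_mul_assoc S_def)
    also have "\<dots> = Dq ** T ** Dq - Di ** T ** Di"
      by (simp add: VtQt QV VtQ' Q'tV T_def matrix_mul_assoc)
    finally show ?thesis .
  qed
  define m where "m = Min (range (\<lambda>i. s $ i))"
  have mpos: "m > 0" using Min_s spos m_def by blast
  have Tii: "T$i$i \<ge> m" for i
  proof -
    have "T$i$i = (\<Sum>k\<in>UNIV. (UQ$k$i)\<^sup>2 * s$k)"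
    proof -
      have "(transpose UQ ** S) $ i $ k = UQ$k$i * s$k" for k
        unfolding S_def diag_mat_def matrix_matrix_mult_def transpose_def
        by (simp add: mult_delta_left mult_delta_right sum.delta sum.delta' cong: if_cong)
      then show ?thesis unfolding T_def matrix_matrix_mult_def[of "transpose UQ ** S"]
        by (simp add: power2_eq_square mult_ac)
    qed
    also have "\<dots> \<ge> (\<Sum>k\<in>UNIV. (UQ$k$i)\<^sup>2 * m)"
      by (rule sum_mono) (simp add: m_def Min_s mult_left_mono)
    moreover have "(\<Sum>k\<in>UNIV. (UQ$k$i)\<^sup>2 * m) = m"
    proof -
      have "(transpose UQ ** UQ)$i$i = 1" using UtU by (simp add: mat_def)
      then have "(\<Sum>k\<in>UNIV. (UQ$k$i)\<^sup>2) = 1"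
        by (simp add: matrix_matrix_mult_def transpose_def power2_eq_square)
      then show ?thesis by (simp add: sum_distrib_right[symmetric])
    qed
    ultimately show ?thesis by simp
  qed
  have Eii: "E$i$i = (sQ$i * sQ$i - inverse (sQ$i) * inverse (sQ$i)) * T$i$i" for i
    by (simp add: Eeq diag_sandwich Dq_def Di_def algebra_simps)
  have per: "m\<^sup>2 * (sQ$i - inverse (sQ$i))\<^sup>2 \<le> (E$i$i)\<^sup>2" for i
  proof -
    define d where "d = sQ$i"
    have dp: "d > 0" using sQpos d_def by simp
    have ge1: "d + inverse d \<ge> 1"
    proof (cases "d \<ge> 1")
      case True then show ?thesis using dp by (smt (verit) inverse_positive_iff_positive)
    next
      case False then have "inverse d \<ge> 1" using dp by (simp add: one_le_inverse)
      then show ?thesis using dp by simp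
    qed
    have fac: "d * d - inverse d * inverse d = (d - inverse d) * (d + inverse d)"
      by (simp add: algebra_simps)
    have "\<bar>m * (d - inverse d)\<bar> \<le> \<bar>(d - inverse d) * (d + inverse d) * T$i$i\<bar>"
    proof -
      have "\<bar>m * (d - inverse d)\<bar> = m * \<bar>d - inverse d\<bar>" using mpos by (simp add: abs_mult)
      also have "\<dots> \<le> T$i$i * \<bar>d - inverse d\<bar>" using Tii[of i] by (simp add: mult_right_mono)
      also have "\<dots> \<le> T$i$i * (\<bar>d - inverse d\<bar> * (d + inverse d))"
        using ge1 Tii[of i] mpos by (intro mult_left_mono) (auto intro: mult_left_mono[of 1 "d + inverse d" "\<bar>d - inverse d\<bar>", simplified])
      also have "\<dots> = \<bar>(d - inverse d) * (d + inverse d) * T$i$i\<bar>"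
        using ge1 Tii[of i] mpos by (simp add: abs_mult)
      finally show ?thesis .
    qed
    then have "(m * (d - inverse d))\<^sup>2 \<le> ((d - inverse d) * (d + inverse d) * T$i$i)\<^sup>2"
      by (metis abs_le_square_iff)
    then show ?thesis by (simp add: Eii d_def[symmetric] fac power_mult_distrib)
  qed
  have "m\<^sup>2 * (\<Sum>i\<in>UNIV. (sQ$i - inverse (sQ$i))\<^sup>2) \<le> (\<Sum>i\<in>UNIV. (E$i$i)\<^sup>2)"
    unfolding sum_distrib_left by (rule sum_mono) (rule per)
  also have "\<dots> \<le> fsq G" using fsq_ge_diag fE by metis
  finally have key: "m\<^sup>2 * (\<Sum>i\<in>UNIV. (sQ$i - inverse (sQ$i))\<^sup>2) \<le> fsq G" .
  have lhs: "frob_norm (diag_mat sQ - diag_mat (\<chi> i. inverse (sQ $ i))) = sqrt (\<Sum>i\<in>UNIV. (sQ$i - inverse (sQ$i))\<^sup>2)"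
    by (simp add: frob_fsq diag_diff fsq_diag)
  have "sqrt (\<Sum>i\<in>UNIV. (sQ$i - inverse (sQ$i))\<^sup>2) \<le> sqrt (fsq G / m\<^sup>2)"
    using key mpos by (intro real_sqrt_le_mono) (simp add: field_simps)
  also have "\<dots> = (1/m) * sqrt (fsq G)"
    using mpos by (simp add: real_sqrt_divide)
  finally show ?thesis unfolding lhs unfolding frob_fsq G_def S_def m_def .
qed

lemma mat_add_rdistrib: "((B::real^'n^'m) + C) ** A = B ** A + C ** A"
  by (simp add: matrix_matrix_mult_def vec_eq_iff sum.distrib distrib_right)

definition tr :: "real^'n^'n \<Rightarrow> real" where "tr A = (\<Sum>i\<in>UNIV. A$i$i)"

lemma tr_comm: "tr ((A::real^'n^'n) ** B) = tr (B ** A)"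
  unfolding tr_def matrix_matrix_mult_def by (simp, subst sum.swap) (simp add: mult.commute)

lemma tr_add: "tr (A + B) = tr A + tr B"
  by (simp add: tr_def sum.distrib)

lemma inner_mv: "(x::real^'n) \<bullet> (A *v y) = (transpose A *v x) \<bullet> y"
  unfolding inner_vec_def matrix_vector_mult_def transpose_def
  by (simp add: sum_distrib_left sum_distrib_right mult_ac, subst sum.swap, simp)

lemma sandwich_diag:
  fixes D C :: "real^'n^'n"
  assumes "transpose D = D"
  shows "(D ** C ** D)$i$i = column i D \<bullet> (C *v column i D)"
proof -
  have sym: "D$j$i = D$i$j" for j using assms by (metis transpose_def vec_lambda_beta)
  show ?thesis
    unfolding inner_vec_def matrix_vector_mult_def matrix_matrix_mult_def column_def
    by (simp add: inner_real_def sym sum_distrib_left sum_distrib_right mult_ac, subst sum.swap, simp add: mult_ac)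
qed

lemma orth_core:
  fixes Q Q' :: "real^'r^'r" and s :: "real^'r"
  assumes QQ': "Q ** Q' = mat 1" and spos: "\<forall>i. s$i > 0"
    and eq: "transpose Q ** diag_mat s ** Q = Q' ** diag_mat s ** transpose Q'"
  shows "orthogonal_matrix Q"
proof -
  define S where "S = diag_mat s"
  define Dh where "Dh = diag_mat (\<chi> i. sqrt (s$i))"
  define Dhi where "Dhi = diag_mat (\<chi> i. inverse (sqrt (s$i)))"
  define P where "P = Q ** transpose Q"
  have DhDh: "Dh ** Dh = S" unfolding Dh_def S_def diag_mult_diag using spos
    by (simp add: less_imp_le)
  have DhDhi: "Dh ** Dhi = mat 1" "Dhi ** Dh = mat 1"
    unfolding Dh_def Dhi_def diag_mult_diag diag_one[symmetric] using spos
    by (simp_all add: vec_eq_iff less_imp_neq[symmetric])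
  have "transpose (Q ** Q') = mat 1" by (simp add: QQ')
  then have Q'tQt: "transpose Q' ** transpose Q = mat 1" by (simp add: matrix_transpose_mul)
  have PSP: "P ** S ** P = S"
  proof -
    have "P ** S ** P = Q ** (transpose Q ** S ** Q) ** transpose Q"
      by (simp add: P_def matrix_mul_assoc)
    also have "\<dots> = (Q ** Q') ** S ** (transpose Q' ** transpose Q)"
      by (simp add: eq[folded S_def] matrix_mul_assoc)
    also have "\<dots> = S" by (simp add: QQ' Q'tQt)
    finally show ?thesis .
  qed
  define W where "W = Dh ** P ** Dh"
  have WW: "W ** W = S ** S"
  proof -
    have "W ** W = Dh ** (P ** (Dh ** Dh) ** P) ** Dh" by (simp add: W_def matrix_mul_assoc)
    also have "\<dots> = Dh ** S ** Dh" using PSP DhDh by simp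
    also have "\<dots> = (Dh ** Dh) ** (Dh ** Dh)" by (simp add: DhDh[symmetric] matrix_mul_assoc)
    also have "\<dots> = S ** S" by (simp only: DhDh)
    finally show ?thesis .
  qed
  have Wt: "transpose W = W"
    by (simp add: W_def P_def matrix_transpose_mul Dh_def matrix_mul_assoc)
  have St: "transpose S = S" by (simp add: S_def)
  define D where "D = W - S"
  have Dt: "transpose D = D" using Wt St by (simp add: D_def transpose_def vec_eq_iff)
  have WDDS: "W ** D + D ** S = 0"
    by (simp add: D_def mat_diff_ldistrib mat_diff_rdistrib WW)
  have tr0: "tr (D ** (W + S) ** D) = 0"
  proof -
    have "tr (D ** (W + S) ** D) = tr (D ** W ** D) + tr (D ** (S ** D))"
      by (simp add: matrix_add_ldistrib mat_add_rdistrib tr_add matrix_mul_assoc)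
    also have "tr (D ** (S ** D)) = tr (D ** (D ** S))"
    proof -
      have "tr (D ** (S ** D)) = tr ((S ** D) ** D)" by (rule tr_comm)
      also have "\<dots> = tr (S ** (D ** D))" by (simp only: matrix_mul_assoc)
      also have "\<dots> = tr ((D ** D) ** S)" by (rule tr_comm)
      also have "\<dots> = tr (D ** (D ** S))" by (simp only: matrix_mul_assoc)
      finally show ?thesis .
    qed
    also have "tr (D ** W ** D) + tr (D ** (D ** S)) = tr (D ** (W ** D + D ** S))"
      by (simp add: matrix_add_ldistrib tr_add matrix_mul_assoc)
    also have "\<dots> = 0" by (simp add: WDDS tr_def)
    finally show ?thesis .
  qed
  have qW: "x \<bullet> (W *v x) \<ge> 0" for x
  proof -
    define z where "z = transpose Q *v (Dh *v x)"
    have "W *v x = Dh *v (Q *v z)"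
      unfolding W_def P_def z_def by (simp add: matrix_vector_mul_assoc matrix_mul_assoc)
    then have "x \<bullet> (W *v x) = (transpose Dh *v x) \<bullet> (Q *v z)" by (simp only: inner_mv)
    also have "\<dots> = (transpose Q *v (transpose Dh *v x)) \<bullet> z" by (rule inner_mv)
    also have "\<dots> = z \<bullet> z" by (simp add: z_def Dh_def)
    finally have "x \<bullet> (W *v x) = z \<bullet> z" .
    then show ?thesis by simp
  qed
  have qS: "x \<bullet> (S *v x) = (\<Sum>k\<in>UNIV. s$k * (x$k)\<^sup>2)" for x
    by (simp add: S_def diag_mv inner_vec_def power2_eq_square mult_ac)
  have qSnn: "x \<bullet> (S *v x) \<ge> 0" for x
    unfolding qS using spos by (intro sum_nonneg) (simp add: less_imp_le)
  have qC: "x \<bullet> ((W + S) *v x) = x \<bullet> (W *v x) + x \<bullet> (S *v x)" for x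
    by (simp add: matrix_vector_mult_add_rdistrib inner_add_right)
  have "(\<Sum>i\<in>UNIV. column i D \<bullet> ((W + S) *v column i D)) = 0"
    using tr0 unfolding tr_def by (simp add: sandwich_diag[OF Dt])
  then have "\<forall>i\<in>UNIV. column i D \<bullet> ((W + S) *v column i D) = 0"
    by (subst sum_nonneg_eq_0_iff[symmetric]) (auto simp: qC intro: add_nonneg_nonneg qW qSnn)
  then have "column i D \<bullet> (S *v column i D) = 0" for i
    using qW[of "column i D"] qSnn[of "column i D"] qC[of "column i D"] by auto
  then have "(\<Sum>k\<in>UNIV. s$k * (column i D $k)\<^sup>2) = 0" for i by (simp add: qS)
  then have "\<forall>k\<in>UNIV. s$k * (column i D $k)\<^sup>2 = 0" for i
    by (subst sum_nonneg_eq_0_iff[symmetric]) (auto intro: mult_nonneg_nonneg simp: spos less_imp_le)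
  then have "D$k$i = 0" for i k using spos by (simp add: column_def) (metis less_numeral_extra(3))
  then have "D = 0" by (simp add: vec_eq_iff)
  then have "W = S" by (simp add: D_def)
  then have "Dhi ** (Dh ** P ** Dh) ** Dhi = Dhi ** (Dh ** Dh) ** Dhi" by (simp add: W_def DhDh)
  moreover have "Dhi ** (Dh ** P ** Dh) ** Dhi = P"
  proof -
    have "Dhi ** (Dh ** P ** Dh) ** Dhi = (Dhi ** Dh) ** P ** (Dh ** Dhi)" by (simp only: matrix_mul_assoc)
    then show ?thesis by (simp add: DhDhi)
  qed
  moreover have "Dhi ** (Dh ** Dh) ** Dhi = mat 1"
  proof -
    have "Dhi ** (Dh ** Dh) ** Dhi = (Dhi ** Dh) ** (Dh ** Dhi)" by (simp only: matrix_mul_assoc)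
    then show ?thesis by (simp add: DhDhi)
  qed
  ultimately have "P = mat 1" by simp
  then show ?thesis unfolding P_def orthogonal_matrix_def using matrix_left_right_inverse by blast
qed

theorem lemma20:
  fixes X Y :: "real^'r^'n" and U V :: "real^'r^'n" and s :: "real^'r"
  assumes rk: "rank (X ** transpose Y) = CARD('r)"
    and svd: "is_compact_svd (X ** transpose Y) U s V"
  shows "\<exists>Q :: real^'r^'r. invertible Q \<and>
           X = U ** diag_mat (\<chi> i. sqrt (s $ i)) ** Q \<and>
           Y = V ** diag_mat (\<chi> i. sqrt (s $ i)) ** transpose (matrix_inv Q) \<and>
           (\<forall>UQ sQ VQ. is_svd Q UQ sQ VQ \<longrightarrow>
              frob_norm (diag_mat sQ - diag_mat (\<chi> i. inverse (sQ $ i)))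
                \<le> (1 / Min (range (\<lambda>i. s $ i))) *
                   frob_norm (transpose X ** X - transpose Y ** Y)) \<and>
           (transpose X ** X = transpose Y ** Y \<longrightarrow> orthogonal_matrix Q)"
proof -
  from svd have UtU: "transpose U ** U = mat 1" and VtV: "transpose V ** V = mat 1"
    and spos: "\<forall>i. s$i > 0" and M: "X ** transpose Y = U ** diag_mat s ** transpose V"
    unfolding is_compact_svd_def by auto
  define S where "S = diag_mat s"
  define Si where "Si = diag_mat (\<chi> i. inverse (s$i))"
  define Dh where "Dh = diag_mat (\<chi> i. sqrt (s$i))"
  define Dhi where "Dhi = diag_mat (\<chi> i. inverse (sqrt (s$i)))"
  have SSi: "S ** Si = mat 1"
    unfolding S_def Si_def diag_mult_diag diag_one[symmetric] using spos
    by (simp add: vec_eq_iff less_imp_neq[symmetric])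
  have DhDh: "Dh ** Dh = S" unfolding Dh_def S_def diag_mult_diag using spos
    by (simp add: less_imp_le)
  have DhDhi: "Dh ** Dhi = mat 1" "Dhi ** Dh = mat 1"
    unfolding Dh_def Dhi_def diag_mult_diag diag_one[symmetric] using spos
    by (simp_all add: vec_eq_iff less_imp_neq[symmetric])
  have St: "transpose S = S" by (simp add: S_def)
  have Dht: "transpose Dh = Dh" by (simp add: Dh_def)
  define C where "C = transpose Y ** V ** Si"
  have XC: "X ** C = U"
  proof -
    have "X ** C = (X ** transpose Y) ** V ** Si" by (simp add: C_def matrix_mul_assoc)
    also have "\<dots> = U ** S ** (transpose V ** V) ** Si" by (simp add: M S_def matrix_mul_assoc)
    also have "\<dots> = U" by (simp add: VtV SSi matrix_mul_assoc[symmetric])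
    finally show ?thesis .
  qed
  define A where "A = transpose U ** X"
  have AC: "A ** C = mat 1" by (simp add: A_def matrix_mul_assoc[symmetric] XC UtU)
  then have CA: "C ** A = mat 1" using matrix_left_right_inverse by blast
  have XUA: "X = U ** A"
  proof -
    have "U ** A = (X ** C) ** A" by (simp add: XC)
    also have "\<dots> = X" by (simp add: matrix_mul_assoc[symmetric] CA)
    finally show ?thesis by simp
  qed
  have MT: "Y ** transpose X = V ** S ** transpose U"
  proof -
    have "transpose (X ** transpose Y) = transpose (U ** diag_mat s ** transpose V)" by (simp add: M)
    then show ?thesis by (simp add: matrix_transpose_mul matrix_mul_assoc S_def)
  qed
  define Dd where "Dd = transpose X ** U ** Si"
  have YD: "Y ** Dd = V"
  proof -
    have "Y ** Dd = (Y ** transpose X) ** U ** Si" by (simp add: Dd_def matrix_mul_assoc)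
    also have "\<dots> = V ** S ** (transpose U ** U) ** Si" by (simp add: MT matrix_mul_assoc)
    also have "\<dots> = V" by (simp add: UtU SSi matrix_mul_assoc[symmetric])
    finally show ?thesis .
  qed
  define B where "B = transpose V ** Y"
  have BD: "B ** Dd = mat 1" by (simp add: B_def matrix_mul_assoc[symmetric] YD VtV)
  then have DB: "Dd ** B = mat 1" using matrix_left_right_inverse by blast
  have YVB: "Y = V ** B"
  proof -
    have "V ** B = (Y ** Dd) ** B" by (simp add: YD)
    also have "\<dots> = Y" by (simp add: matrix_mul_assoc[symmetric] DB)
    finally show ?thesis by simp
  qed
  have ABt: "A ** transpose B = S"
  proof -
    have "A ** transpose B = transpose U ** (X ** transpose Y) ** V"
      by (simp add: A_def B_def matrix_transpose_mul matrix_mul_assoc)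
    also have "\<dots> = (transpose U ** U) ** S ** (transpose V ** V)"
      by (simp add: M S_def matrix_mul_assoc)
    also have "\<dots> = S" by (simp add: UtU VtV)
    finally show ?thesis .
  qed
  have Bt: "transpose B = C ** S"
  proof -
    have "transpose B = (C ** A) ** transpose B" by (simp add: CA)
    also have "\<dots> = C ** S" by (simp add: matrix_mul_assoc[symmetric] ABt)
    finally show ?thesis .
  qed
  have BSC: "B = S ** transpose C"
  proof -
    have "B = transpose (transpose B)" by simp
    also have "\<dots> = S ** transpose C" by (simp add: Bt matrix_transpose_mul St)
    finally show ?thesis .
  qed
  define Q where "Q = Dhi ** A"
  define Q' where "Q' = C ** Dh"
  have QQ': "Q ** Q' = mat 1"
  proof -
    have "Q ** Q' = Dhi ** (A ** C) ** Dh" by (simp add: Q_def Q'_def matrix_mul_assoc)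
    then show ?thesis by (simp add: AC DhDhi)
  qed
  have invQ: "invertible Q" using QQ' invertible_right_inverse by blast
  have minv: "matrix_inv Q = Q'" using matrix_inv_eq[OF QQ'] .
  have ADQ: "A = Dh ** Q"
  proof -
    have "Dh ** Q = (Dh ** Dhi) ** A" by (simp add: Q_def matrix_mul_assoc)
    then show ?thesis by (simp add: DhDhi)
  qed
  have Q't: "transpose Q' = Dh ** transpose C" by (simp add: Q'_def matrix_transpose_mul Dht)
  have BDQ: "B = Dh ** transpose Q'"
  proof -
    have "Dh ** transpose Q' = (Dh ** Dh) ** transpose C" by (simp add: Q't matrix_mul_assoc)
    then show ?thesis by (simp add: DhDh BSC)
  qed
  have Xeq: "X = U ** Dh ** Q" by (simp add: XUA ADQ matrix_mul_assoc)
  have Yeq: "Y = V ** Dh ** transpose Q'" by (simp add: YVB BDQ matrix_mul_assoc)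
  have XtX: "transpose X ** X = transpose Q ** S ** Q"
  proof -
    have "transpose X ** X = transpose A ** (transpose U ** U) ** A"
      by (simp add: XUA matrix_transpose_mul matrix_mul_assoc)
    also have "\<dots> = transpose Q ** (Dh ** Dh) ** Q"
      by (simp add: UtU ADQ matrix_transpose_mul Dht matrix_mul_assoc)
    finally show ?thesis by (simp add: DhDh)
  qed
  have YtY: "transpose Y ** Y = Q' ** S ** transpose Q'"
  proof -
    have "transpose Y ** Y = transpose B ** (transpose V ** V) ** B"
      by (simp add: YVB matrix_transpose_mul matrix_mul_assoc)
    also have "\<dots> = Q' ** (Dh ** Dh) ** transpose Q'"
      by (simp add: VtV BDQ matrix_transpose_mul Dht matrix_mul_assoc)
    finally show ?thesis by (simp add: DhDh)
  qed
  show ?thesis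
  proof (intro exI[of _ Q] conjI allI impI)
    show "invertible Q" by (rule invQ)
    show "X = U ** diag_mat (\<chi> i. sqrt (s $ i)) ** Q" using Xeq by (simp add: Dh_def)
    show "Y = V ** diag_mat (\<chi> i. sqrt (s $ i)) ** transpose (matrix_inv Q)"
      using Yeq by (simp add: Dh_def minv)
    fix UQ sQ VQ assume "is_svd Q UQ sQ VQ"
    from ineq_core[OF QQ' spos this]
    show "frob_norm (diag_mat sQ - diag_mat (\<chi> i. inverse (sQ $ i)))
                \<le> (1 / Min (range (\<lambda>i. s $ i))) *
                   frob_norm (transpose X ** X - transpose Y ** Y)"
      by (simp add: XtX YtY S_def)
  next
    assume "transpose X ** X = transpose Y ** Y"
    then have "transpose Q ** diag_mat s ** Q = Q' ** diag_mat s ** transpose Q'"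
      using XtX YtY by (simp add: S_def)
    then show "orthogonal_matrix Q" by (rule orth_core[OF QQ' spos])
  qed
qed

end
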